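(* Let $\beta \ge 1$ and $\epsilon \in (0,1)$, and let $f:[-1,1]\to\mathbb{R}$ be the Fermi–Dirac distribution $$f(x) = \frac{1}{e^{\beta x}+1}.$$ Then there is a polynomial $p_d$ of degree $d = O\!\left(\beta \log\frac{\beta}{\epsilon}\right)$ (with an absolute implied constant) such that $\|f - p_d\|_{[-1,1]} \le \epsilon$ and $\|p_d\|_{[-1,1]} \le 1+\epsilon$.
   Context: For a function $g$ on $[-1,1]$, $\|g\|_{[-1,1]} = \sup_{x\in[-1,1]} |g(x)|$ denotes the uniform norm. *)

theory Defs
  imports "HOL-Analysis.Analysis" "HOL-Computational_Algebra.Polynomial"
begin

definition fermi_dirac :: "real \<Rightarrow> real \<Rightarrow> real" where
  "fermi_dirac \<beta> x = 1 / (exp (\<beta> * x) + 1)"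

end

theory Submission
  imports Defs "HOL-Complex_Analysis.Complex_Analysis"
begin

lemma annulus_cauchy:
  fixes g :: "complex \<Rightarrow> complex" and r R :: real
  assumes hol: "g holomorphic_on A" and opn: "open A"
    and sub: "\<And>w. r \<le> norm w \<Longrightarrow> norm w \<le> R \<Longrightarrow> w \<in> A"
    and r: "0 < r" "r < norm z" "norm z < R"
  shows "contour_integral (circlepath 0 R) (\<lambda>w. g w/(w - z)) - contour_integral (circlepath 0 r) (\<lambda>w. g w/(w - z)) = 2 * of_real pi * \<i> * g z"
proof -
  define d where "d = (\<lambda>w. if w = z then deriv g z else (g w - g z)/(w - z))"
  have hd: "d holomorphic_on A" using pole_lemma_open[OF hol opn] by (simp add: d_def)
  have hom: "homotopic_loops A (circlepath 0 R) (circlepath 0 r)"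
  proof (rule homotopic_loops_linear)
    fix t :: real
    show "closed_segment (circlepath 0 R t) (circlepath 0 r t) \<subseteq> A"
    proof
      fix y assume "y \<in> closed_segment (circlepath 0 R t) (circlepath 0 r t)"
      then obtain u where u: "0 \<le> u" "u \<le> 1" and y: "y = (1 - u) *\<^sub>R circlepath 0 R t + u *\<^sub>R circlepath 0 r t"
        by (auto simp: closed_segment_def)
      define e where "e = exp (2 * of_real pi * \<i> * of_real t)"
      have ne: "norm e = 1" unfolding e_def by (simp add: norm_exp)
      have ye: "y = of_real ((1 - u) * R + u * r) * e"
        by (simp add: y circlepath e_def scaleR_conv_of_real algebra_simps)
      have nn: "0 \<le> (1 - u) * R + u * r" using u r by (simp add: add_nonneg_nonneg)
      have ny: "norm y = (1 - u) * R + u * r"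
        unfolding ye norm_mult norm_of_real ne using nn by simp
      have "r \<le> (1 - u) * R + u * r" "(1 - u) * R + u * r \<le> R"
      proof -
        have "0 \<le> (1 - u) * (R - r)" "0 \<le> u * (R - r)" using u r by auto
        then show "r \<le> (1 - u) * R + u * r" "(1 - u) * R + u * r \<le> R" by (auto simp: algebra_simps)
      qed
      then show "y \<in> A" using sub ny by auto
    qed
  qed auto
  have vR: "valid_path (circlepath 0 R)" and vr: "valid_path (circlepath 0 r)" by auto
  have eqd: "contour_integral (circlepath 0 R) d = contour_integral (circlepath 0 r) d"
    by (rule Cauchy_theorem_homotopic_loops[OF hom opn hd vR vr])
  have hz: "(\<lambda>w. g w/(w - z)) holomorphic_on (A - {z})"
    by (intro holomorphic_intros holomorphic_on_subset[OF hol]) auto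
  have oz: "open (A - {z})" using opn by auto
  have i1: "(\<lambda>w. g w/(w - z)) contour_integrable_on circlepath 0 R"
    by (rule contour_integrable_holomorphic_simple[OF hz oz vR]) (use r sub in auto)
  have i2: "(\<lambda>w. g w/(w - z)) contour_integrable_on circlepath 0 r"
    by (rule contour_integrable_holomorphic_simple[OF hz oz vr]) (use r sub in auto)
  have c1: "((\<lambda>w. g z/(w - z)) has_contour_integral (2 * of_real pi * \<i> * g z)) (circlepath 0 R)"
    using Cauchy_integral_circlepath[of 0 R "\<lambda>_. g z" z] r by auto
  have c2: "((\<lambda>w. g z/(w - z)) has_contour_integral 0) (circlepath 0 r)"
  proof (rule Cauchy_theorem_disc_simple[of _ 0 "norm z"])
    show "(\<lambda>w. g z / (w - z)) holomorphic_on ball 0 (cmod z)"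
      by (intro holomorphic_intros) auto
  qed (use r in auto)
  have "(d has_contour_integral (contour_integral (circlepath 0 R) (\<lambda>w. g w/(w - z)) - 2 * of_real pi * \<i> * g z)) (circlepath 0 R)"
    by (rule has_contour_integral_eq[OF has_contour_integral_diff[OF has_contour_integral_integral[OF i1] c1]])
       (use r in \<open>auto simp: d_def diff_divide_distrib\<close>)
  note h1 = contour_integral_unique[OF this]
  have "(d has_contour_integral (contour_integral (circlepath 0 r) (\<lambda>w. g w/(w - z)) - 0)) (circlepath 0 r)"
    by (rule has_contour_integral_eq[OF has_contour_integral_diff[OF has_contour_integral_integral[OF i2] c2]])
       (use r in \<open>auto simp: d_def diff_divide_distrib\<close>)
  note h2 = contour_integral_unique[OF this]
  show ?thesis using eqd h1 h2 by (simp add: algebra_simps)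
qed

lemma geo_sum:
  fixes w z :: complex
  assumes "w \<noteq> 0" "w \<noteq> z"
  shows "(\<Sum>k<N. z^k / w^(Suc k)) = (1 - (z/w)^N)/(w - z)"
proof (induction N)
  case 0 then show ?case by simp
next
  case (Suc N)
  have wz: "w - z \<noteq> 0" using assms by auto
  show ?case unfolding sum.lessThan_Suc Suc.IH using assms wz by (simp add: field_simps power_divide)
qed

lemma outer_bound:
  fixes g :: "complex \<Rightarrow> complex" and z w :: complex
  assumes "norm (g w) \<le> 1" "norm z = 1" "norm w = \<rho>" "1 < \<rho>"
  shows "norm (g w * (z/w)^N / (w - z)) \<le> 1 / (\<rho>^N * (\<rho> - 1))"
proof -
  have d: "\<rho> - 1 \<le> norm (w - z)" using norm_triangle_ineq2[of w z] assms by simp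
  have "norm (g w * (z/w)^N / (w - z)) = norm (g w) * (1/\<rho>)^N / norm (w - z)"
    using assms by (simp add: norm_mult norm_divide norm_power)
  also have "\<dots> \<le> 1 * (1/\<rho>)^N / (\<rho> - 1)"
    using assms d by (intro divide_mono mult_mono) auto
  finally show ?thesis by (simp add: power_one_over)
qed

lemma inner_bound:
  fixes g :: "complex \<Rightarrow> complex" and z w :: complex
  assumes "norm (g w) \<le> 1" "norm z = 1" "norm w = 1/\<rho>" "1 < \<rho>"
  shows "norm (g w * (w/z)^N / (w - z)) \<le> \<rho> / (\<rho>^N * (\<rho> - 1))"
proof -
  have d: "1 - 1/\<rho> \<le> norm (w - z)" using norm_triangle_ineq2[of z w] assms by (simp add: norm_minus_commute)
  have pos: "0 < 1 - 1/\<rho>" using assms by (simp add: field_simps)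
  have "norm (g w * (w/z)^N / (w - z)) = norm (g w) * (1/\<rho>)^N / norm (w - z)"
    using assms by (simp add: norm_mult norm_divide norm_power)
  also have "\<dots> \<le> 1 * (1/\<rho>)^N / (1 - 1/\<rho>)"
    using assms d pos by (intro divide_mono mult_mono) auto
  also have "\<dots> = \<rho> / (\<rho>^N * (\<rho> - 1))" using assms by (simp add: field_simps power_one_over)
  finally show ?thesis .
qed

lemma laurent_trunc:
  fixes g :: "complex \<Rightarrow> complex" and \<rho> :: real and z :: complex
  assumes hol: "g holomorphic_on A" and opn: "open A"
    and sub: "\<And>w. 1/\<rho> \<le> norm w \<Longrightarrow> norm w \<le> \<rho> \<Longrightarrow> w \<in> A"
    and bnd: "\<And>w. 1/\<rho> \<le> norm w \<Longrightarrow> norm w \<le> \<rho> \<Longrightarrow> norm (g w) \<le> 1"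
    and \<rho>: "1 < \<rho>" and z: "norm z = 1"
  shows "norm (g z - (\<Sum>k<N. (contour_integral (circlepath 0 \<rho>) (\<lambda>w. g w / w^Suc k) / (2 * of_real pi * \<i>)) * z^k
            + (contour_integral (circlepath 0 (1/\<rho>)) (\<lambda>w. g w * w^k) / (2 * of_real pi * \<i>)) * (1/z)^Suc k))
         \<le> (\<rho>+1)/(\<rho>^N*(\<rho>-1))"
proof -
  define c :: complex where "c = 2 * of_real pi * \<i>"
  have c0: "c \<noteq> 0" and nc: "norm c = 2*pi" by (auto simp: c_def norm_mult)
  define A' where "A' = A - {0, z}"
  have oA': "open A'" using opn by (auto simp: A'_def)
  have z0: "z \<noteq> 0" using z by auto
  have rp: "0 < \<rho>" "0 < 1/\<rho>" "1/\<rho> < 1" using \<rho> by auto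
  have rle: "1/\<rho> \<le> \<rho>" using rp \<rho> by linarith
  have s1: "path_image (circlepath 0 \<rho>) \<subseteq> A'"
  proof
    fix w assume "w \<in> path_image (circlepath 0 \<rho>)"
    then have "norm w = \<rho>" using rp by auto
    then show "w \<in> A'" using sub[of w] rp \<rho> z by (auto simp: A'_def)
  qed
  have s2: "path_image (circlepath 0 (1/\<rho>)) \<subseteq> A'"
  proof
    fix w assume "w \<in> path_image (circlepath 0 (1/\<rho>))"
    then have "norm w = (1/\<rho>)" using rp by auto
    then show "w \<in> A'" using sub[of w] rp \<rho> z by (auto simp: A'_def)
  qed
  have holA': "g holomorphic_on A'" using hol by (rule holomorphic_on_subset) (auto simp: A'_def)
  have v1: "valid_path (circlepath 0 \<rho>)" and v2: "valid_path (circlepath 0 (1/\<rho>))" by auto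
  define Ao where "Ao k = contour_integral (circlepath 0 \<rho>) (\<lambda>w. g w / w^Suc k)" for k
  define Bi where "Bi k = contour_integral (circlepath 0 (1/\<rho>)) (\<lambda>w. g w * w^k)" for k
  define R1 where "R1 = contour_integral (circlepath 0 \<rho>) (\<lambda>w. g w * (z/w)^N / (w - z))"
  define R2 where "R2 = contour_integral (circlepath 0 (1/\<rho>)) (\<lambda>w. g w * (w/z)^N / (w - z))"
  have int: "f contour_integrable_on p" if "f holomorphic_on A'" "valid_path p" "path_image p \<subseteq> A'" for f p
    using contour_integrable_holomorphic_simple[OF that(1) oA' that(2,3)] .
  have hAo: "((\<lambda>w. g w / w^Suc k) has_contour_integral Ao k) (circlepath 0 \<rho>)" for k
    unfolding Ao_def by (rule has_contour_integral_integral, rule int[OF _ v1 s1])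
       (intro holomorphic_intros holA', auto simp: A'_def)
  have hBi: "((\<lambda>w. g w * w^k) has_contour_integral Bi k) (circlepath 0 (1/\<rho>))" for k
    unfolding Bi_def by (rule has_contour_integral_integral, rule int[OF _ v2 s2])
       (intro holomorphic_intros holA')
  have hR1: "((\<lambda>w. g w * (z/w)^N / (w - z)) has_contour_integral R1) (circlepath 0 \<rho>)"
    unfolding R1_def by (rule has_contour_integral_integral, rule int[OF _ v1 s1])
       (intro holomorphic_intros holA', auto simp: A'_def)
  have hR2: "((\<lambda>w. g w * (w/z)^N / (w - z)) has_contour_integral R2) (circlepath 0 (1/\<rho>))"
    unfolding R2_def by (rule has_contour_integral_integral, rule int[OF _ v2 s2])
       (intro holomorphic_intros holA', auto simp: A'_def z0)
  have I1: "((\<lambda>w. g w/(w-z)) has_contour_integral ((\<Sum>k<N. z^k * Ao k) + R1)) (circlepath 0 \<rho>)"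
  proof (rule has_contour_integral_eq)
    show "((\<lambda>w. (\<Sum>k<N. z^k * (g w / w^Suc k)) + g w * (z/w)^N / (w - z)) has_contour_integral ((\<Sum>k<N. z^k * Ao k) + R1)) (circlepath 0 \<rho>)"
      by (intro has_contour_integral_add has_contour_integral_sum has_contour_integral_lmul hAo hR1) auto
  next
    fix w assume "w \<in> path_image (circlepath 0 \<rho>)"
    then have w: "norm w = \<rho>" using rp by auto
    then have w0: "w \<noteq> 0" and wz: "w \<noteq> z" using \<rho> z by auto
    have "(\<Sum>k<N. z^k * (g w / w^Suc k)) = g w * (\<Sum>k<N. z^k / w^Suc k)"
      by (simp add: sum_distrib_left algebra_simps)
    also have "\<dots> = g w * ((1 - (z/w)^N)/(w - z))" using geo_sum[OF w0 wz] by simp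
    finally have hS: "(\<Sum>k<N. z^k * (g w / w^Suc k)) = g w * ((1 - (z/w)^N)/(w - z))" .
    have gen: "g w * ((1 - q)/(w - z)) + g w * q / (w - z) = g w / (w - z)" for q :: complex
    proof -
      have "g w * ((1 - q)/(w - z)) + g w * q / (w - z) = (g w * (1 - q) + g w * q) / (w - z)"
        by (simp add: add_divide_distrib)
      also have "\<dots> = g w / (w - z)" by (simp add: algebra_simps)
      finally show ?thesis .
    qed
    show "(\<Sum>k<N. z^k * (g w / w^Suc k)) + g w * (z/w)^N / (w - z) = g w / (w - z)"
      unfolding hS by (rule gen)
  qed
  have I2: "((\<lambda>w. g w/(w-z)) has_contour_integral (R2 - (\<Sum>k<N. (1/z)^Suc k * Bi k))) (circlepath 0 (1/\<rho>))"
  proof (rule has_contour_integral_eq)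
    show "((\<lambda>w. g w * (w/z)^N / (w - z) - (\<Sum>k<N. (1/z)^Suc k * (g w * w^k))) has_contour_integral (R2 - (\<Sum>k<N. (1/z)^Suc k * Bi k))) (circlepath 0 (1/\<rho>))"
      by (intro has_contour_integral_diff has_contour_integral_sum has_contour_integral_lmul hBi hR2) auto
  next
    fix w assume "w \<in> path_image (circlepath 0 (1/\<rho>))"
    then have w: "norm w = 1/\<rho>" using rp by auto
    then have wz: "z \<noteq> w" using rp z by auto
    have "(\<Sum>k<N. (1/z)^Suc k * (g w * w^k)) = g w * (\<Sum>k<N. w^k / z^Suc k)"
      by (simp add: sum_distrib_left algebra_simps power_one_over)
    also have "\<dots> = g w * ((1 - (w/z)^N)/(z - w))" using geo_sum[OF z0 wz] by simp
    finally have hS: "(\<Sum>k<N. (1/z)^Suc k * (g w * w^k)) = g w * ((1 - (w/z)^N)/(z - w))" .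
    have gen: "g w * q / (w - z) - g w * ((1 - q)/(z - w)) = g w / (w - z)" for q :: complex
    proof -
      have m: "(1 - q)/(z - w) = - ((1 - q)/(w - z))" by (metis minus_diff_eq divide_minus_right)
      have "g w * q / (w - z) - g w * ((1 - q)/(z - w)) = (g w * q + g w * (1 - q)) / (w - z)"
        unfolding m by (simp add: add_divide_distrib)
      also have "\<dots> = g w / (w - z)" by (simp add: algebra_simps)
      finally show ?thesis .
    qed
    show "g w * (w/z)^N / (w - z) - (\<Sum>k<N. (1/z)^Suc k * (g w * w^k)) = g w / (w - z)"
      unfolding hS by (rule gen)
  qed
  have main: "contour_integral (circlepath 0 \<rho>) (\<lambda>w. g w/(w - z)) - contour_integral (circlepath 0 (1/\<rho>)) (\<lambda>w. g w/(w - z)) = c * g z"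
    unfolding c_def by (rule annulus_cauchy[OF hol opn]) (use sub z rp in auto)
  have eq: "c * g z = (\<Sum>k<N. z^k * Ao k) + R1 - (R2 - (\<Sum>k<N. (1/z)^Suc k * Bi k))"
    using main contour_integral_unique[OF I1] contour_integral_unique[OF I2] by simp
  have eq2: "g z - (\<Sum>k<N. Ao k / c * z^k + Bi k / c * (1/z)^Suc k) = (R1 - R2) / c"
  proof -
    have "c * (\<Sum>k<N. Ao k / c * z^k + Bi k / c * (1/z)^Suc k) = (\<Sum>k<N. z^k * Ao k) + (\<Sum>k<N. (1/z)^Suc k * Bi k)"
      using c0 by (simp add: sum_distrib_left sum.distrib algebra_simps)
    then show ?thesis using eq c0 by (simp add: field_simps)
  qed
  have b1: "norm R1 \<le> 1/(\<rho>^N*(\<rho>-1)) * (2*pi*\<rho>)"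
    by (rule has_contour_integral_bound_circlepath[OF hR1]) (use \<rho> z rle in \<open>auto intro!: outer_bound bnd\<close>)
  have b2: "norm R2 \<le> \<rho>/(\<rho>^N*(\<rho>-1)) * (2*pi*(1/\<rho>))"
    by (rule has_contour_integral_bound_circlepath[OF hR2]) (use \<rho> z rle in \<open>auto intro!: inner_bound bnd\<close>)
  have "norm ((R1 - R2) / c) \<le> (norm R1 + norm R2) / (2*pi)"
    unfolding norm_divide nc by (intro divide_right_mono norm_triangle_ineq4) auto
  also have "\<dots> \<le> (1/(\<rho>^N*(\<rho>-1)) * (2*pi*\<rho>) + \<rho>/(\<rho>^N*(\<rho>-1)) * (2*pi*(1/\<rho>))) / (2*pi)"
    using b1 b2 by (intro divide_right_mono) auto
  also have "\<dots> = (\<rho>+1)/(\<rho>^N*(\<rho>-1))"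
  proof -
    have gen: "(1/D * (2*pi*\<rho>) + \<rho>/D * (2*pi*(1/\<rho>))) / (2*pi) = (\<rho>+1)/D" if "D \<noteq> 0" for D
      using that \<rho> by (simp add: field_simps)
    have "\<rho>^N*(\<rho>-1) \<noteq> 0" using \<rho> by simp
    then show ?thesis by (rule gen)
  qed
  finally show ?thesis using eq2 unfolding Ao_def Bi_def c_def by simp
qed

fun cheb :: "nat \<Rightarrow> real poly" where
  "cheb 0 = 1"
| "cheb (Suc 0) = [:0, 1:]"
| "cheb (Suc (Suc n)) = [:0, 2:] * cheb (Suc n) - cheb n"

lemma cheb_cos: "poly (cheb n) (cos t) = cos (real n * t)"
proof (induction n rule: cheb.induct)
  case (3 n)
  define u where "u = real (Suc n) * t"
  have e1: "real (Suc (Suc n)) * t = u + t" by (simp add: u_def algebra_simps)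
  have e2: "real n * t = u - t" by (simp add: u_def algebra_simps)
  have "cos (u + t) = 2 * cos t * cos u - cos (u - t)" by (simp add: cos_add cos_diff)
  then show ?case using 3 unfolding e1 cheb.simps poly_diff poly_mult e2 u_def[symmetric] by simp
qed auto

lemma cheb_degree: "degree (cheb n) \<le> n"
proof (induction n rule: cheb.induct)
  case (3 n)
  have "degree ([:0, 2:] * cheb (Suc n)) \<le> Suc (Suc n)"
    using degree_mult_le[of "[:0, 2:]" "cheb (Suc n)"] 3 by simp
  then show ?case using 3 by (auto intro: order.trans[OF degree_diff_le])
qed auto

lemma cis_sum: "cis a + cis (-a) = complex_of_real (2 * cos a)"
  by (simp add: complex_eq_iff)

lemma cis_pow_sum: "cis t ^ k + cis (-t) ^ k = complex_of_real (2 * cos (real k * t))"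
  using cis_sum[of "real k * t"] by (simp only: Complex.DeMoivre mult_minus_right)


lemma real_approx:
  fixes g :: "complex \<Rightarrow> complex" and h :: "real \<Rightarrow> real" and \<rho> :: real
  assumes hol: "g holomorphic_on A" and opn: "open A"
    and sub: "\<And>w. 1/\<rho> \<le> norm w \<Longrightarrow> norm w \<le> \<rho> \<Longrightarrow> w \<in> A"
    and bnd: "\<And>w. 1/\<rho> \<le> norm w \<Longrightarrow> norm w \<le> \<rho> \<Longrightarrow> norm (g w) \<le> 1"
    and \<rho>: "1 < \<rho>" and gh: "\<And>t. g (cis t) = complex_of_real (h (cos t))"
  shows "\<exists>P. degree P \<le> N \<and> (\<forall>x\<in>{-1..1}. \<bar>h x - poly P x\<bar> \<le> (\<rho>+1)/(\<rho>^N*(\<rho>-1)))"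
proof -
  define a where "a k = contour_integral (circlepath 0 \<rho>) (\<lambda>w. g w / w^Suc k) / (2 * of_real pi * \<i>)" for k
  define b where "b k = contour_integral (circlepath 0 (1/\<rho>)) (\<lambda>w. g w * w^k) / (2 * of_real pi * \<i>)" for k
  define Sf where "Sf z = (\<Sum>k<N. a k * z^k + b k * (1/z)^Suc k)" for z
  define B where "B = (\<rho>+1)/(\<rho>^N*(\<rho>-1))"
  have E: "norm (g z - Sf z) \<le> B" if "norm z = 1" for z
    using laurent_trunc[OF hol opn sub bnd \<rho> that, of N] unfolding Sf_def a_def b_def B_def by simp
  define P where "P = (\<Sum>k<N. smult (Re (a k)) (cheb k) + smult (Re (b k)) (cheb (Suc k)))"
  have degP: "degree P \<le> N"
    unfolding P_def
  proof (intro degree_sum_le)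
    fix k assume "k \<in> {..<N}"
    then have "degree (smult (Re (a k)) (cheb k)) \<le> N" "degree (smult (Re (b k)) (cheb (Suc k))) \<le> N"
      using cheb_degree[of k] cheb_degree[of "Suc k"] degree_smult_le
      by (auto intro: order.trans)
    then show "degree (smult (Re (a k)) (cheb k) + smult (Re (b k)) (cheb (Suc k))) \<le> N"
      by (auto intro: order.trans[OF degree_add_le])
  qed auto
  have "\<bar>h x - poly P x\<bar> \<le> B" if x: "x \<in> {-1..1}" for x
  proof -
    define t where "t = arccos x"
    have ct: "cos t = x" using x by (simp add: t_def cos_arccos)
    define z1 where "z1 = cis t"
    define z2 where "z2 = cis (-t)"
    have n1: "norm z1 = 1" "norm z2 = 1" by (auto simp: z1_def z2_def)
    have i1: "1/z1 = z2" and i2: "1/z2 = z1"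
      by (auto simp: z1_def z2_def divide_inverse)
    have g1: "g z1 = complex_of_real (h x)" and g2: "g z2 = complex_of_real (h x)"
      using gh[of t] gh[of "-t"] ct by (auto simp: z1_def z2_def)
    have "Re (Sf z1 + Sf z2) = (\<Sum>k<N. Re (a k * (z1^k + z2^k)) + Re (b k * (z2^Suc k + z1^Suc k)))"
      unfolding Sf_def i1 i2 sum.distrib[symmetric] Re_sum
      by (rule sum.cong[OF refl]) (simp add: algebra_simps)
    also have "\<dots> = (\<Sum>k<N. Re (a k) * (2 * cos (real k * t)) + Re (b k) * (2 * cos (real (Suc k) * t)))"
    proof (rule sum.cong[OF refl])
      fix k
      have "z1^k + z2^k = complex_of_real (2 * cos (real k * t))"
        unfolding z1_def z2_def by (rule cis_pow_sum)
      moreover have "z2^Suc k + z1^Suc k = complex_of_real (2 * cos (real (Suc k) * t))"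
        unfolding z1_def z2_def by (subst add.commute) (rule cis_pow_sum)
      ultimately show "Re (a k * (z1^k + z2^k)) + Re (b k * (z2^Suc k + z1^Suc k)) =
          Re (a k) * (2 * cos (real k * t)) + Re (b k) * (2 * cos (real (Suc k) * t))"
        by simp
    qed
    also have "\<dots> = 2 * poly P x"
      unfolding P_def poly_sum ct[symmetric] by (simp add: cheb_cos sum_distrib_left algebra_simps)
    finally have RS: "Re (Sf z1 + Sf z2) = 2 * poly P x" .
    have eq: "2 * (h x - poly P x) = Re (g z1 - Sf z1) + Re (g z2 - Sf z2)"
      using RS g1 g2 by simp
    have "\<bar>Re (g z1 - Sf z1) + Re (g z2 - Sf z2)\<bar> \<le> norm (g z1 - Sf z1) + norm (g z2 - Sf z2)"
      using abs_Re_le_cmod[of "g z1 - Sf z1"] abs_Re_le_cmod[of "g z2 - Sf z2"] by linarith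
    also have "\<dots> \<le> 2 * B" using E[OF n1(1)] E[OF n1(2)] by simp
    finally show ?thesis unfolding eq[symmetric] by simp
  qed
  then show ?thesis using degP unfolding B_def by blast
qed

lemma im_w_bound:
  fixes w :: complex and r0 :: real
  assumes "w \<noteq> 0" "1/r0 < norm w" "norm w < r0"
  shows "\<bar>Im (w + 1/w)\<bar> \<le> r0 - 1/r0"
proof -
  define r where "r = norm w"
  have r: "0 < r" using assms by (simp add: r_def)
  have n2: "(Re w)^2 + (Im w)^2 = r^2" by (simp add: r_def cmod_power2)
  have im: "Im (w + 1/w) = Im w * (1 - 1/r^2)"
    using n2 r by (simp add: Im_divide field_simps)
  have y: "\<bar>Im w\<bar> \<le> r" using abs_Im_le_cmod[of w] by (simp add: r_def)
  have "\<bar>Im w * (1 - 1/r^2)\<bar> = \<bar>Im w\<bar> * \<bar>1 - 1/r^2\<bar>" by (simp add: abs_mult)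
  also have "\<dots> \<le> r * \<bar>1 - 1/r^2\<bar>" using y by (intro mult_right_mono) auto
  also have "\<dots> = \<bar>r - 1/r\<bar>" using r by (simp add: abs_mult[symmetric] field_simps power2_eq_square)
  also have "\<dots> \<le> r0 - 1/r0"
  proof -
    have r0: "0 < r0" using r assms(3) unfolding r_def by linarith
    have a: "1/r < r0" using assms r r0 by (simp add: r_def field_simps)
    have b: "1/r0 < 1/r" using assms r r0 by (simp add: r_def field_simps)
    show ?thesis using a b assms by (simp add: r_def abs_le_iff)
  qed
  finally show ?thesis using im by simp
qed

lemma exp_plus_one_bound:
  fixes u :: complex
  assumes "\<bar>Im u\<bar> \<le> 1"
  shows "1 \<le> norm (exp u + 1)"
proof -
  have "0 < cos (Im u)" using assms pi_gt3 by (intro cos_gt_zero_pi) auto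
  then have "0 \<le> Re (exp u)" by (simp add: Re_exp)
  then have "1 \<le> Re (exp u + 1)" by simp
  also have "\<dots> \<le> norm (exp u + 1)" by (rule complex_Re_le_cmod)
  finally show ?thesis .
qed

definition FD :: "real \<Rightarrow> complex \<Rightarrow> complex" where
  "FD \<beta> w = 1 / (exp (complex_of_real \<beta> * (w + 1/w) / 2) + 1)"

lemma FD_props:
  fixes \<beta> :: real
  assumes \<beta>: "1 \<le> \<beta>"
  defines "r0 \<equiv> 1 + 1/\<beta>"
  defines "A \<equiv> ball 0 r0 - cball 0 (1/r0)"
  shows "open A" "FD \<beta> holomorphic_on A" "\<And>w. w \<in> A \<Longrightarrow> norm (FD \<beta> w) \<le> 1"
proof -
  show "open A" unfolding A_def by auto
  have r0: "1 < r0" using \<beta> by (simp add: r0_def)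
  have key: "1 \<le> norm (exp (complex_of_real \<beta> * (w + 1/w) / 2) + 1)" and w0: "w \<noteq> 0" if w: "w \<in> A" for w
  proof -
    have w': "1/r0 < norm w" "norm w < r0" using w by (auto simp: A_def)
    then show "w \<noteq> 0" using r0 by auto
    have ib: "\<bar>Im (w + 1/w)\<bar> \<le> r0 - 1/r0" by (rule im_w_bound[OF \<open>w \<noteq> 0\<close> w'])
    have e: "r0 - 1/r0 = 1/\<beta> + 1/(\<beta>+1)" using \<beta> by (simp add: r0_def field_simps)
    have "1/(\<beta>+1) \<le> 1/\<beta>" using \<beta> by (intro divide_left_mono) auto
    moreover have "2/\<beta> = 1/\<beta> + 1/\<beta>" by simp
    ultimately have "r0 - 1/r0 \<le> 2/\<beta>" unfolding e by linarith
    have "\<bar>Im (complex_of_real \<beta> * (w + 1/w) / 2)\<bar> = \<beta> * \<bar>Im (w + 1/w)\<bar> / 2"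
      using \<beta> by (simp add: abs_mult)
    also have "\<dots> \<le> \<beta> * (2/\<beta>) / 2"
      using ib \<open>r0 - 1/r0 \<le> 2/\<beta>\<close> \<beta> by (intro divide_right_mono mult_left_mono) auto
    also have "\<dots> = 1" using \<beta> by simp
    finally show "1 \<le> norm (exp (complex_of_real \<beta> * (w + 1/w) / 2) + 1)"
      by (rule exp_plus_one_bound)
  qed
  show "FD \<beta> holomorphic_on A"
    unfolding FD_def
  proof (intro holomorphic_intros)
    fix w assume "w \<in> A"
    from key[OF this] show "exp (complex_of_real \<beta> * (w + 1/w) / 2) + 1 \<noteq> 0" by auto
    from w0[OF \<open>w \<in> A\<close>] show "w \<noteq> 0" .
  qed auto
  show "norm (FD \<beta> w) \<le> 1" if "w \<in> A" for w
    using key[OF that] unfolding FD_def by (simp add: norm_divide divide_le_eq)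
qed

lemma FD_cis: "FD \<beta> (cis t) = complex_of_real (fermi_dirac \<beta> (cos t))"
proof -
  have h: "cis t + 1 / cis t = complex_of_real (2 * cos t)"
    using cis_sum[of t] by (simp add: divide_inverse)
  have eq: "complex_of_real \<beta> * (cis t + 1 / cis t) / 2 = complex_of_real (\<beta> * cos t)" unfolding h by simp
  show ?thesis unfolding FD_def fermi_dirac_def eq exp_of_real by simp
qed


theorem theorem2:
  shows "\<exists>C > 0. \<forall>(\<beta>::real) (\<epsilon>::real). \<beta> \<ge> 1 \<longrightarrow> 0 < \<epsilon> \<longrightarrow> \<epsilon> < 1 \<longrightarrow>
    (\<exists>p :: real poly. real (degree p) \<le> C * \<beta> * ln (\<beta> / \<epsilon>) \<and>
      (\<forall>x \<in> {-1..1}. \<bar>fermi_dirac \<beta> x - poly p x\<bar> \<le> \<epsilon>) \<and>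
      (\<forall>x \<in> {-1..1}. \<bar>poly p x\<bar> \<le> 1 + \<epsilon>))"
proof (rule exI[of _ "20::real"], intro conjI allI impI)
  show "(0::real) < 20" by simp
  fix \<beta> \<epsilon> :: real assume \<beta>: "1 \<le> \<beta>" and e0: "0 < \<epsilon>" and e1: "\<epsilon> < 1"
  have fd01: "0 < fermi_dirac \<beta> x \<and> fermi_dirac \<beta> x < 1" for x
  proof -
    have p: "0 < exp (\<beta> * x)" by simp
    then have q: "0 < exp (\<beta> * x) + 1" by linarith
    have a: "0 < 1 / (exp (\<beta> * x) + 1)" using q by (rule divide_pos_pos[OF zero_less_one])
    have b: "1 / (exp (\<beta> * x) + 1) < 1" using p q by (subst divide_less_eq_1_pos) auto
    show ?thesis unfolding fermi_dirac_def using a b by blast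
  qed
  have be1: "1 \<le> \<beta> / \<epsilon>" using \<beta> e0 e1 by (simp add: le_divide_eq)
  then have L0: "0 \<le> ln (\<beta> / \<epsilon>)" by simp
  show "\<exists>p :: real poly. real (degree p) \<le> 20 * \<beta> * ln (\<beta> / \<epsilon>) \<and>
      (\<forall>x \<in> {-1..1}. \<bar>fermi_dirac \<beta> x - poly p x\<bar> \<le> \<epsilon>) \<and>
      (\<forall>x \<in> {-1..1}. \<bar>poly p x\<bar> \<le> 1 + \<epsilon>)"
  proof (cases "1/2 \<le> \<epsilon>")
    case True
    show ?thesis
    proof (intro exI[of _ "[:1/2:]"] conjI ballI)
      show "real (degree [:1/2::real:]) \<le> 20 * \<beta> * ln (\<beta> / \<epsilon>)" using \<beta> L0 by simp
      fix x :: real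
      show "\<bar>fermi_dirac \<beta> x - poly [:1/2:] x\<bar> \<le> \<epsilon>" using fd01[of x] True by (simp add: abs_le_iff)
      show "\<bar>poly [:1/2::real:] x\<bar> \<le> 1 + \<epsilon>" using e0 by simp
    qed
  next
    case False
    then have eh: "\<epsilon> < 1/2" by simp
    define L where "L = ln (\<beta> / \<epsilon>)"
    have "2 \<le> \<beta> / \<epsilon>" using \<beta> e0 eh by (simp add: le_divide_eq)
    then have L2: "ln 2 \<le> L" unfolding L_def by simp
    have "ln (1/2::real) \<le> 1/2 - 1" by (rule ln_le_minus_one) simp
    then have ln2: "1/2 \<le> ln (2::real)" by (simp add: ln_div)
    have "ln (5::real) \<le> ln (2^3)" by simp
    also have "\<dots> = 3 * ln 2" by (simp only: ln_realpow)
    finally have ln5: "ln (5::real) \<le> 3 * ln 2" .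
    have l5: "ln (5 * \<beta> / \<epsilon>) = ln 5 + L"
    proof -
      have q: "5 * \<beta> / \<epsilon> = 5 * (\<beta> / \<epsilon>)" by simp
      have "0 < \<beta> / \<epsilon>" using \<beta> e0 by simp
      then have "ln (5 * (\<beta> / \<epsilon>)) = ln 5 + ln (\<beta> / \<epsilon>)" by (intro ln_mult_pos) auto
      then show ?thesis unfolding L_def q .
    qed
    have l5b: "ln (5 * \<beta> / \<epsilon>) \<le> 4 * L" using l5 ln5 L2 by linarith
    have l5p: "0 \<le> ln (5 * \<beta> / \<epsilon>)" using l5 ln2 L2 ln_ge_zero[of "5::real"] by linarith
    define \<rho> where "\<rho> = 1 + 1/(2*\<beta>)"
    define r0 where "r0 = 1 + 1/\<beta>"
    define A where "A = ball (0::complex) r0 - cball 0 (1/r0)"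
    have \<rho>1: "1 < \<rho>" using \<beta> by (simp add: \<rho>_def)
    have \<rho>r0: "\<rho> < r0" using \<beta> by (simp add: \<rho>_def r0_def divide_strict_left_mono)
    have r0p: "0 < r0" using \<beta> by (simp add: r0_def add_pos_pos)
    have sub: "w \<in> A" if "1/\<rho> \<le> norm w" "norm w \<le> \<rho>" for w :: complex
    proof -
      have "1/r0 < 1/\<rho>" using \<rho>1 \<rho>r0 by (intro divide_strict_left_mono) auto
      then show ?thesis using that \<rho>r0 by (auto simp: A_def)
    qed
    note FP = FD_props[OF \<beta>, folded r0_def, folded A_def]
    define N where "N = nat \<lceil>4 * \<beta> * ln (5 * \<beta> / \<epsilon>)\<rceil>"
    obtain P where degP: "degree P \<le> N"
      and appr: "\<And>x. x \<in> {-1..1} \<Longrightarrow> \<bar>fermi_dirac \<beta> x - poly P x\<bar> \<le> (\<rho>+1)/(\<rho>^N*(\<rho>-1))"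
      using real_approx[OF FP(2) FP(1) sub FP(3)[OF sub] \<rho>1 FD_cis, of N] by blast
    have lnr: "1/(4*\<beta>) \<le> ln \<rho>"
    proof -
      define x where "x = 1/(2*\<beta>)"
      have x: "0 \<le> x" "x \<le> 1/2" using \<beta> by (auto simp: x_def field_simps)
      have "x - x^2 \<le> ln (1 + x)" using x by (intro ln_one_plus_pos_lower_bound) auto
      moreover have "x/2 \<le> x - x^2"
      proof -
        have "x * (2 * x) \<le> x * 1" using x by (intro mult_left_mono) auto
        then show ?thesis by (simp add: power2_eq_square algebra_simps)
      qed
      moreover have "x/2 = 1/(4*\<beta>)" by (simp add: x_def)
      ultimately show ?thesis by (simp add: \<rho>_def x_def)
    qed
    have NL: "4 * \<beta> * ln (5 * \<beta> / \<epsilon>) \<le> real N" unfolding N_def by (rule real_nat_ceiling_ge)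
    have "ln (5 * \<beta> / \<epsilon>) = (4 * \<beta> * ln (5 * \<beta> / \<epsilon>)) * (1/(4*\<beta>))" using \<beta> by simp
    also have "\<dots> \<le> real N * ln \<rho>" using NL lnr l5p \<beta> by (intro mult_mono) auto
    also have "\<dots> = ln (\<rho>^N)" by (simp add: ln_realpow)
    finally have "ln (5 * \<beta> / \<epsilon>) \<le> ln (\<rho>^N)" .
    then have rN: "5 * \<beta> / \<epsilon> \<le> \<rho>^N" using \<rho>1 \<beta> e0 by (subst (asm) ln_le_cancel_iff) auto
    have rNp: "0 < \<rho>^N" using \<rho>1 by simp
    have B: "(\<rho>+1)/(\<rho>^N*(\<rho>-1)) \<le> \<epsilon>"
    proof -
      have "(\<rho>+1)/(\<rho>^N*(\<rho>-1)) = (4*\<beta>+1)/\<rho>^N" using \<beta> by (simp add: \<rho>_def field_simps)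
      also have "\<dots> \<le> (5*\<beta>)/\<rho>^N" using \<beta> rNp by (intro divide_right_mono) auto
      also have "\<dots> \<le> \<epsilon>" using rN rNp e0 by (simp add: divide_le_eq mult.commute pos_divide_le_eq)
      finally show ?thesis .
    qed
    show ?thesis
    proof (intro exI[of _ P] conjI ballI)
      have "real N \<le> 4 * \<beta> * ln (5 * \<beta> / \<epsilon>) + 1"
        unfolding N_def using \<beta> l5p by (simp add: of_nat_ceiling)
      also have "\<dots> \<le> 16 * \<beta> * L + 2 * \<beta> * L"
      proof -
        have "4 * \<beta> * ln (5 * \<beta> / \<epsilon>) \<le> 4 * \<beta> * (4 * L)" using l5b \<beta> by (intro mult_left_mono) auto
        moreover have "1 \<le> 2 * \<beta> * L"
        proof -
          have h: "1 \<le> 2 * L" using L2 ln2 by linarith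
          have m: "(2 * L) * 1 \<le> (2 * L) * \<beta>" by (rule mult_left_mono) (use \<beta> h in auto)
          have e: "(2 * L) * \<beta> = 2 * \<beta> * L" by (simp add: mult_ac)
          show ?thesis using h m unfolding e by linarith
        qed
        ultimately show ?thesis by linarith
      qed
      also have "\<dots> \<le> 20 * \<beta> * L" using \<beta> L2 ln2 by simp
      finally show "real (degree P) \<le> 20 * \<beta> * ln (\<beta> / \<epsilon>)"
        using degP unfolding L_def by linarith
    next
      fix x :: real assume x: "x \<in> {-1..1}"
      show "\<bar>fermi_dirac \<beta> x - poly P x\<bar> \<le> \<epsilon>" using appr[OF x] B by linarith
      then show "\<bar>poly P x\<bar> \<le> 1 + \<epsilon>" using fd01[of x] by linarith
    qed
  qed
qed


end
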